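(* The simplicial generators $\{h_S:\emptyset\subsetneq S\subseteq E\}$ form a basis of $A^1(X_{\mathbf a})$. In particular, monomials in them span $A^\bullet(X_{\mathbf a})$ as an abelian group.
   Context: $E=\{1,\dots,m\}$, $\mathbf a\in\mathbb Z^m_{\ge0}$, $n=\sum a_i$, $\widetilde E$ an $n$-element set, $\pi:\widetilde E\to E$ with $|\pi^{-1}(i)|=a_i$, $\mathbf e_U=\sum_{j\in U}\mathbf e_j$. The polystellahedral fan $\Sigma_{\mathbf a}\subset\mathbb R^{\widetilde E}$ has cones $\operatorname{cone}(-\mathbf e_{\widetilde E\setminus\pi^{-1}(F_1)},\dots,-\mathbf e_{\widetilde E\setminus\pi^{-1}(F_k)},\mathbf e_j:j\in I)$ for $I\subseteq\widetilde E$ and chains $F_1\subsetneq\dots\subsetneq F_k\subsetneq F_{k+1}=E$ ($k\ge0$) with $\pi^{-1}(A)\subseteq I\Rightarrow A\subseteq F_1$; $X_{\mathbf a}$ is its smooth projective toric variety and $A^\bullet(X_{\mathbf a})$ its Chow ring. For $\emptyset\subseteq T\subsetneq E$, $x_T$ is the divisor class of the ray $\mathbb R_{\ge0}(-\mathbf e_{\widetilde E\setminus\pi^{-1}(T)})$. For nonempty $S\subseteq E$, $h_S=\sum_{\emptyset\subseteq T\subsetneq E,\ T\not\supseteq S}x_T$. *)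

theory Defs
  imports "HOL-Library.Poly_Mapping"
begin

text \<open>Ray labels of the polystellahedral fan: Inl T stands for the ray of
  -e_(Et - pi^-1(T)) (T a proper subset of E), Inr j for the ray of e_j (j in Et).\<close>
type_synonym 'b ray = "nat set + 'b"

type_synonym 'b rpoly = "('b ray \<Rightarrow>\<^sub>0 nat) \<Rightarrow>\<^sub>0 int"

definition groundE :: "nat \<Rightarrow> nat set" where
  "groundE m = {1..m}"

definition preim :: "'b set \<Rightarrow> ('b \<Rightarrow> nat) \<Rightarrow> nat set \<Rightarrow> 'b set" where
  "preim Et \<pi> A = {j \<in> Et. \<pi> j \<in> A}"

definition rays :: "nat \<Rightarrow> 'b set \<Rightarrow> 'b ray set" where
  "rays m Et = Inl ` {T. T \<subset> groundE m} \<union> Inr ` Et"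

definition ray_vec :: "nat \<Rightarrow> 'b set \<Rightarrow> ('b \<Rightarrow> nat) \<Rightarrow> 'b ray \<Rightarrow> 'b \<Rightarrow> int" where
  "ray_vec m Et \<pi> r = (case r of
      Inl T \<Rightarrow> (\<lambda>j. if j \<in> Et - preim Et \<pi> T then -1 else 0)
    | Inr i \<Rightarrow> (\<lambda>j. if j = i then 1 else 0))"

text \<open>Ray sets of the cones of the polystellahedral fan:
  cone(-e_(Et - pi^-1 F_1), ..., -e_(Et - pi^-1 F_k), e_j : j in I) for a chain
  F_1 < ... < F_k < F_(k+1) = E and I subset Et with pi^-1(A) subset I ==> A subset F_1.\<close>
definition is_face :: "nat \<Rightarrow> 'b set \<Rightarrow> ('b \<Rightarrow> nat) \<Rightarrow> 'b ray set \<Rightarrow> bool" where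
  "is_face m Et \<pi> R \<longleftrightarrow>
     (\<exists>C I. C \<subseteq> {T. T \<subset> groundE m} \<and>
            (\<forall>F\<in>C. \<forall>G\<in>C. F \<subseteq> G \<or> G \<subseteq> F) \<and>
            I \<subseteq> Et \<and>
            (\<forall>A \<subseteq> groundE m. preim Et \<pi> A \<subseteq> I \<longrightarrow>
                 A \<subseteq> (if C = {} then groundE m else \<Inter>C)) \<and>
            R = Inl ` C \<union> Inr ` I)"

definition var :: "'b ray \<Rightarrow> 'b rpoly" where
  "var r = Poly_Mapping.single (Poly_Mapping.single r 1) 1"

definition uses_vars :: "'b ray set \<Rightarrow> 'b rpoly \<Rightarrow> bool" where
  "uses_vars R p \<longleftrightarrow> (\<forall>mon \<in> Poly_Mapping.keys p. Poly_Mapping.keys mon \<subseteq> R)"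

definition SR_gens :: "nat \<Rightarrow> 'b set \<Rightarrow> ('b \<Rightarrow> nat) \<Rightarrow> 'b rpoly set" where
  "SR_gens m Et \<pi> = {(\<Prod>r\<in>R. var r) | R. R \<subseteq> rays m Et \<and> \<not> is_face m Et \<pi> R}"

definition lin_gens :: "nat \<Rightarrow> 'b set \<Rightarrow> ('b \<Rightarrow> nat) \<Rightarrow> 'b rpoly set" where
  "lin_gens m Et \<pi> = (\<lambda>u :: 'b \<Rightarrow> int.
      (\<Sum>r\<in>rays m Et. of_int (\<Sum>j\<in>Et. u j * ray_vec m Et \<pi> r j) * var r)) ` UNIV"

definition ideal_gen :: "'c::comm_ring_1 set \<Rightarrow> 'c set" where
  "ideal_gen G = {p. \<exists>F c. finite F \<and> F \<subseteq> G \<and> p = (\<Sum>g\<in>F. c g * g)}"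

text \<open>The Chow ring A(X_a) = Z[x_rho : rho ray] / (I_SR + J): two polynomials in the
  ray variables represent the same Chow class iff their difference lies in this ideal.\<close>
definition chow_ideal :: "nat \<Rightarrow> 'b set \<Rightarrow> ('b \<Rightarrow> nat) \<Rightarrow> 'b rpoly set" where
  "chow_ideal m Et \<pi> = ideal_gen (SR_gens m Et \<pi> \<union> lin_gens m Et \<pi>)"

definition xT :: "nat set \<Rightarrow> 'b rpoly" where
  "xT T = var (Inl T)"

definition hS :: "nat \<Rightarrow> nat set \<Rightarrow> 'b rpoly" where
  "hS m S = (\<Sum>T\<in>{T. T \<subset> groundE m \<and> \<not> S \<subseteq> T}. xT T)"

definition linear_form :: "'b ray set \<Rightarrow> 'b rpoly \<Rightarrow> bool" where
  "linear_form R p \<longleftrightarrow> (\<exists>c. p = (\<Sum>r\<in>R. of_int (c r) * var r))"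

end

theory Submission
  imports Defs
begin



lemma add_eq_single1:
  fixes a b :: "'x \<Rightarrow>\<^sub>0 nat"
  shows "(a + b = Poly_Mapping.single r 1) \<longleftrightarrow> (a = 0 \<and> b = Poly_Mapping.single r 1) \<or> (a = Poly_Mapping.single r 1 \<and> b = 0)"
proof
  assume h: "a + b = Poly_Mapping.single r 1"
  have l: "Poly_Mapping.lookup a x + Poly_Mapping.lookup b x = (if x = r then 1 else 0)" for x
    using arg_cong[OF h, of "\<lambda>p. Poly_Mapping.lookup p x"] by (simp add: lookup_add lookup_single when_def)
  show "(a = 0 \<and> b = Poly_Mapping.single r 1) \<or> (a = Poly_Mapping.single r 1 \<and> b = 0)"
  proof (cases "Poly_Mapping.lookup a r = 0")
    case True
    then have "Poly_Mapping.lookup a x = 0" for x using l[of x] by (cases "x = r") auto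
    then have a0: "a = 0" by (auto intro!: poly_mapping_eqI)
    then have "b = Poly_Mapping.single r 1" using l
      by (intro poly_mapping_eqI) (simp add: lookup_single when_def)
    then show ?thesis using a0 by simp
  next
    case False
    then have "Poly_Mapping.lookup a x = (if x = r then 1 else 0)" "Poly_Mapping.lookup b x = 0" for x
      using l[of x] l[of r] by (cases "x = r"; auto)+
    then have "a = Poly_Mapping.single r 1" "b = 0"
      by (auto intro!: poly_mapping_eqI simp: lookup_single when_def)
    then show ?thesis by simp
  qed
qed auto

lemma lookup_mult_single1:
  fixes p q :: "('x \<Rightarrow>\<^sub>0 nat) \<Rightarrow>\<^sub>0 int"
  shows "Poly_Mapping.lookup (p * q) (Poly_Mapping.single r 1) =
     Poly_Mapping.lookup p 0 * Poly_Mapping.lookup q (Poly_Mapping.single r 1) + Poly_Mapping.lookup p (Poly_Mapping.single r 1) * Poly_Mapping.lookup q 0"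
proof -
  let ?s = "Poly_Mapping.single r (1::nat)"
  have s0: "?s \<noteq> 0" by (metis lookup_single_eq lookup_zero one_neq_zero)
  have inner: "(\<Sum>qq. Poly_Mapping.lookup q qq when ?s = l + qq) =
      (if l = 0 then Poly_Mapping.lookup q ?s else if l = ?s then Poly_Mapping.lookup q 0 else 0)" for l
  proof (cases "l = 0")
    case True
    then show ?thesis by (simp add: eq_commute[of ?s])
  next
    case False
    show ?thesis
    proof (cases "l = ?s")
      case True
      have "(\<lambda>qq. Poly_Mapping.lookup q qq when ?s = l + qq) = (\<lambda>qq. Poly_Mapping.lookup q qq when qq = 0)"
      proof -
        have e: "(?s = l + qq) = (qq = 0)" for qq using True by (metis add.right_neutral add_left_cancel)
        show ?thesis by (simp only: e)
      qed
      then show ?thesis using True s0 by simp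
    next
      case F2: False
      have "(\<lambda>qq. Poly_Mapping.lookup q qq when ?s = l + qq) = (\<lambda>qq. 0)"
      proof -
        have e: "(?s = l + qq) = False" for qq using add_eq_single1[of l qq r] False F2 by metis
        show ?thesis by (simp only: e when_simps)
      qed
      then show ?thesis using False F2 by (simp only: Sum_any.neutral if_False if_not_P)
    qed
  qed
  have "Poly_Mapping.lookup (p * q) ?s = (\<Sum>l. Poly_Mapping.lookup p l * (if l = 0 then Poly_Mapping.lookup q ?s else if l = ?s then Poly_Mapping.lookup q 0 else 0))"
    unfolding lookup_mult inner by (rule refl)
  also have "\<dots> = (\<Sum>l\<in>{0, ?s}. Poly_Mapping.lookup p l * (if l = 0 then Poly_Mapping.lookup q ?s else if l = ?s then Poly_Mapping.lookup q 0 else 0))"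
    by (rule Sum_any.expand_superset) auto
  also have "\<dots> = Poly_Mapping.lookup p 0 * Poly_Mapping.lookup q ?s + Poly_Mapping.lookup p ?s * Poly_Mapping.lookup q 0"
    using s0 by simp
  finally show ?thesis .
qed

definition coef :: "'b ray \<Rightarrow> 'b rpoly \<Rightarrow> int" where
  "coef r p = Poly_Mapping.lookup p (Poly_Mapping.single r 1)"
definition cst :: "'b rpoly \<Rightarrow> int" where
  "cst p = Poly_Mapping.lookup p 0"

lemma coef_add: "coef r (p + q) = coef r p + coef r q"
  by (simp add: coef_def lookup_add)
lemma coef_diff: "coef r (p - q) = coef r p - coef r q"
  by (simp add: coef_def lookup_minus)
lemma coef_sum: "coef r (sum f A) = (\<Sum>x\<in>A. coef r (f x))"
  by (simp add: coef_def lookup_sum)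
lemma coef_mult: "coef r (p * q) = cst p * coef r q + coef r p * cst q"
  unfolding coef_def cst_def by (rule lookup_mult_single1)

lemma single1_nz: "Poly_Mapping.single r (1::nat) \<noteq> 0"
  by (metis lookup_single_eq lookup_zero one_neq_zero)
lemma single1_nz': "Poly_Mapping.single r (Suc 0) \<noteq> 0"
  apply (rule notI)
  apply (drule arg_cong[where f="\<lambda>p. Poly_Mapping.lookup p r"])
  apply simp
  done
lemma single1_inj: "Poly_Mapping.single r (1::nat) = Poly_Mapping.single r' 1 \<longleftrightarrow> r = r'"
  by (metis lookup_single_eq lookup_single_not_eq one_neq_zero)

lemma lookup_of_int_mult: "Poly_Mapping.lookup (of_int k * (p :: 'b rpoly)) x = k * Poly_Mapping.lookup p x"
proof -
  have "of_int k * p = Poly_Mapping.single 0 k * p" by (metis of_int_eq_id id_apply single_of_int)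
  also have "\<dots> = Poly_Mapping.map ((*) k) p" by (rule mult_map_scale_conv_mult[symmetric])
  finally show ?thesis by (simp add: Poly_Mapping.map.rep_eq when_def)
qed

lemma coef_of_int_mult: "coef r (of_int k * p) = k * coef r p"
  by (simp add: coef_def lookup_of_int_mult)

lemma coef_var: "coef r (var r') = (if r' = r then 1 else 0)"
  unfolding coef_def var_def lookup_single when_def single1_inj by auto
lemma cst_var: "cst (var r') = 0"
  unfolding cst_def var_def lookup_single when_def by (auto simp: single1_nz')

lemma cst_add: "cst (p + q) = cst p + cst q"
  by (simp add: cst_def lookup_add)
lemma cst_sum: "cst (sum f A) = (\<Sum>x\<in>A. cst (f x))"
  by (simp add: cst_def lookup_sum)
lemma cst_of_int_mult: "cst (of_int k * p) = k * cst p"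
  by (simp add: cst_def lookup_of_int_mult)

lemma prod_var: "finite R \<Longrightarrow> (\<Prod>r\<in>R. var r) = Poly_Mapping.single (\<Sum>r\<in>R. Poly_Mapping.single r 1) (1::int)"
proof (induction R rule: finite_induct)
  case empty then show ?case by simp
next
  case (insert x F)
  then show ?case by (simp add: var_def mult_single)
qed

lemma lookup_sum_single1: "finite R \<Longrightarrow> Poly_Mapping.lookup (\<Sum>r\<in>R. Poly_Mapping.single r (1::nat)) x = (if x \<in> R then 1 else 0)"
  by (simp add: lookup_sum lookup_single when_def)

lemma prod_var_deg2:
  assumes "finite R" "R \<noteq> {}" "\<And>r. R \<noteq> {r}"
  shows "cst (\<Prod>r\<in>R. var r) = 0" "coef r (\<Prod>r\<in>R. var r) = 0"
proof -
  let ?M = "(\<Sum>r\<in>R. Poly_Mapping.single r (1::nat))"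
  obtain x where x: "x \<in> R" using assms(2) by blast
  have "?M \<noteq> 0" using arg_cong[of _ _ "\<lambda>p. Poly_Mapping.lookup p x"] lookup_sum_single1[OF assms(1), of x] x by force
  then show "cst (\<Prod>r\<in>R. var r) = 0" using assms(1) by (simp add: prod_var cst_def lookup_single when_def)
  obtain y where y: "y \<in> R" "y \<noteq> r" using assms(2,3) by blast
  have "?M \<noteq> Poly_Mapping.single r 1"
  proof
    assume "?M = Poly_Mapping.single r 1"
    then have "Poly_Mapping.lookup ?M y = Poly_Mapping.lookup (Poly_Mapping.single r (1::nat)) y" by simp
    then show False using y lookup_sum_single1[OF assms(1), of y] by (simp add: lookup_single when_def)
  qed
  then show "coef r (\<Prod>r\<in>R. var r) = 0" using assms(1) by (simp add: prod_var coef_def lookup_single when_def)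
qed




lemma finite_PT: "finite {T. T \<subset> groundE m}"
  by (rule finite_subset[of _ "Pow (groundE m)"]) (auto simp: groundE_def)

lemma finite_rays: "finite Et \<Longrightarrow> finite (rays m Et)"
  unfolding rays_def using finite_PT by auto

definition lgen :: "nat \<Rightarrow> 'b set \<Rightarrow> ('b \<Rightarrow> nat) \<Rightarrow> ('b \<Rightarrow> int) \<Rightarrow> 'b rpoly" where
  "lgen m Et \<pi> u = (\<Sum>r\<in>rays m Et. of_int (\<Sum>j\<in>Et. u j * ray_vec m Et \<pi> r j) * var r)"

lemma lin_gens_lgen: "lin_gens m Et \<pi> = range (lgen m Et \<pi>)"
  unfolding lin_gens_def lgen_def by simp

lemma coef_lgen: "finite Et \<Longrightarrow> r \<in> rays m Et \<Longrightarrow> coef r (lgen m Et \<pi> u) = (\<Sum>j\<in>Et. u j * ray_vec m Et \<pi> r j)"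
  unfolding lgen_def coef_sum coef_of_int_mult coef_var
  using finite_rays[of Et m] by (simp add: if_distrib cong: if_cong)

lemma cst_lgen: "cst (lgen m Et \<pi> u) = 0"
  unfolding lgen_def cst_sum cst_of_int_mult cst_var by simp

lemma face_empty: "is_face m Et \<pi> {}"
  unfolding is_face_def by (rule exI[of _ "{}"], rule exI[of _ "{}"]) auto

lemma face_Inr: "j \<in> Et \<Longrightarrow> is_face m Et \<pi> {Inr j}"
  unfolding is_face_def by (rule exI[of _ "{}"], rule exI[of _ "{j}"]) auto

lemma face_Inl:
  assumes "\<forall>i\<in>groundE m. \<exists>j\<in>Et. \<pi> j = i" "T \<subset> groundE m"
  shows "is_face m Et \<pi> {Inl T}"
  unfolding is_face_def
proof (rule exI[of _ "{T}"], rule exI[of _ "{}"], intro conjI allI impI)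
  fix A assume "A \<subseteq> groundE m" "preim Et \<pi> A \<subseteq> {}"
  then have "A = {}" using assms(1) unfolding preim_def by fastforce
  then show "A \<subseteq> (if {T} = {} then groundE m else \<Inter> {T})" by simp
qed (use assms in auto)

lemma nonface_big:
  assumes "\<forall>i\<in>groundE m. \<exists>j\<in>Et. \<pi> j = i" "R \<subseteq> rays m Et" "\<not> is_face m Et \<pi> R"
  shows "R \<noteq> {}" "R \<noteq> {r}"
proof -
  show "R \<noteq> {}" using assms(3) face_empty by auto
  show "R \<noteq> {r}"
  proof
    assume R: "R = {r}"
    then have "r \<in> rays m Et" using assms(2) by auto
    then show False unfolding rays_def
    proof
      assume "r \<in> Inl ` {T. T \<subset> groundE m}"
      then obtain T where "r = Inl T" "T \<subset> groundE m" by auto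
      then show False using R assms(3) face_Inl[OF assms(1)] by simp
    next
      assume "r \<in> Inr ` Et"
      then obtain j where "r = Inr j" "j \<in> Et" by auto
      then show False using R assms(3) face_Inr[of j Et m \<pi>] by simp
    qed
  qed
qed

lemma SR_props:
  assumes "finite Et" "\<forall>i\<in>groundE m. \<exists>j\<in>Et. \<pi> j = i" "g \<in> SR_gens m Et \<pi>"
  shows "cst g = 0" "coef r g = 0"
proof -
  obtain R where R: "g = (\<Prod>r\<in>R. var r)" "R \<subseteq> rays m Et" "\<not> is_face m Et \<pi> R"
    using assms(3) unfolding SR_gens_def by (elim CollectE exE conjE) (rule that)
  have fin: "finite R" by (rule finite_subset[OF R(2) finite_rays[OF assms(1)]])
  show "cst g = 0" "coef r g = 0" unfolding R(1)
    using prod_var_deg2[OF fin nonface_big(1)[OF assms(2) R(2,3)] nonface_big(2)[OF assms(2) R(2,3)]] by auto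
qed

lemma ideal_coef:
  assumes "finite Et" "\<forall>i\<in>groundE m. \<exists>j\<in>Et. \<pi> j = i" "p \<in> chow_ideal m Et \<pi>"
  shows "\<exists>U. \<forall>r\<in>rays m Et. coef r p = (\<Sum>j\<in>Et. U j * ray_vec m Et \<pi> r j)"
proof -
  obtain F c where F: "finite F" "F \<subseteq> SR_gens m Et \<pi> \<union> lin_gens m Et \<pi>" "p = (\<Sum>g\<in>F. c g * g)"
    using assms(3) unfolding chow_ideal_def ideal_gen_def by (elim CollectE exE conjE) (rule that)
  define w where "w g = (if g \<in> lin_gens m Et \<pi> then (SOME u. g = lgen m Et \<pi> u) else (\<lambda>_. 0))" for g
  have gprop: "cst g = 0 \<and> coef r g = (\<Sum>j\<in>Et. w g j * ray_vec m Et \<pi> r j)" if "g \<in> F" "r \<in> rays m Et" for g r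
  proof (cases "g \<in> lin_gens m Et \<pi>")
    case True
    have ex: "\<exists>u. g = lgen m Et \<pi> u" using True unfolding lin_gens_lgen by auto
    have "g = lgen m Et \<pi> (w g)" unfolding w_def using True someI_ex[OF ex] by simp
    then show ?thesis using cst_lgen[of m Et \<pi> "w g"] coef_lgen[OF assms(1) that(2), of \<pi> "w g"] by simp
  next
    case False
    then have "g \<in> SR_gens m Et \<pi>" using F(2) that(1) by blast
    then show ?thesis using SR_props[OF assms(1,2)] False unfolding w_def by simp
  qed
  define U where "U j = (\<Sum>g\<in>F. cst (c g) * w g j)" for j
  show ?thesis
  proof (intro exI ballI)
    fix r assume r: "r \<in> rays m Et"
    have "coef r p = (\<Sum>g\<in>F. cst (c g) * coef r g)"
      unfolding F(3) coef_sum coef_mult using gprop r by (intro sum.cong) auto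
    also have "\<dots> = (\<Sum>g\<in>F. \<Sum>j\<in>Et. cst (c g) * w g j * ray_vec m Et \<pi> r j)"
      using gprop r by (intro sum.cong) (auto simp: sum_distrib_left mult.assoc)
    also have "\<dots> = (\<Sum>j\<in>Et. U j * ray_vec m Et \<pi> r j)"
      unfolding U_def sum_distrib_right by (rule sum.swap)
    finally show "coef r p = (\<Sum>j\<in>Et. U j * ray_vec m Et \<pi> r j)" .
  qed
qed




lemma comb1:
  fixes E :: "'x set" and d :: "'x set \<Rightarrow> int"
  assumes fin: "finite E"
    and h: "\<forall>T. T \<subset> E \<longrightarrow> (\<Sum>S\<in>{S. S \<noteq> {} \<and> S \<subseteq> E}. d S * (if S \<subseteq> T then 0 else 1)) = 0"
  shows "\<forall>S. S \<noteq> {} \<and> S \<subseteq> E \<longrightarrow> d S = 0"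
proof (cases "E = {}")
  case True then show ?thesis by auto
next
  case False
  let ?NE = "{S. S \<noteq> {} \<and> S \<subseteq> E}"
  have finNE: "finite ?NE" by (rule finite_subset[of _ "Pow E"]) (use fin in auto)
  have D0: "(\<Sum>S\<in>?NE. d S) = 0"
  proof -
    have "(\<Sum>S\<in>?NE. d S * (if S \<subseteq> {} then 0 else 1)) = 0" using h False by auto
    moreover have "(\<Sum>S\<in>?NE. d S * (if S \<subseteq> {} then 0 else 1)) = (\<Sum>S\<in>?NE. d S)"
      by (intro sum.cong) auto
    ultimately show ?thesis by simp
  qed
  have sub: "(\<Sum>S\<in>{S. S \<noteq> {} \<and> S \<subseteq> T}. d S) = 0" if T: "T \<subseteq> E" for T
  proof (cases "T = E")
    case True then show ?thesis using D0 by simp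
  next
    case False
    then have "T \<subset> E" using T by auto
    then have "0 = (\<Sum>S\<in>?NE. d S * (if S \<subseteq> T then 0 else 1))" using h by simp
    also have "\<dots> = (\<Sum>S\<in>?NE. d S - (if S \<subseteq> T then d S else 0))"
      by (intro sum.cong) auto
    also have "\<dots> = (\<Sum>S\<in>?NE. d S) - (\<Sum>S\<in>?NE. (if S \<subseteq> T then d S else 0))"
      by (rule sum_subtractf)
    also have "(\<Sum>S\<in>?NE. (if S \<subseteq> T then d S else 0)) = (\<Sum>S\<in>{S\<in>?NE. S \<subseteq> T}. d S)"
      using finNE by (rule sum.inter_filter[symmetric])
    also have "{S\<in>?NE. S \<subseteq> T} = {S. S \<noteq> {} \<and> S \<subseteq> T}" using T by auto
    finally show ?thesis using D0 by simp
  qed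
  have main: "\<forall>S. card S = n \<longrightarrow> S \<noteq> {} \<and> S \<subseteq> E \<longrightarrow> d S = 0" for n
  proof (induction n rule: less_induct)
    case (less n)
    show ?case
    proof (intro allI impI)
      fix S assume cS: "card S = n" and S: "S \<noteq> {} \<and> S \<subseteq> E"
      have finS: "finite S" using S fin finite_subset by blast
      have finP: "finite {S'. S' \<noteq> {} \<and> S' \<subseteq> S}"
        by (rule finite_subset[of _ "Pow S"]) (use finS in auto)
      have eq: "{S'. S' \<noteq> {} \<and> S' \<subseteq> S} = insert S {S'. S' \<noteq> {} \<and> S' \<subset> S}" using S by auto
      have z: "(\<Sum>S'\<in>{S'. S' \<noteq> {} \<and> S' \<subset> S}. d S') = 0"
      proof (rule sum.neutral, rule ballI)
        fix S' assume "S' \<in> {S'. S' \<noteq> {} \<and> S' \<subset> S}"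
        then have "S' \<noteq> {}" "S' \<subset> S" by auto
        then have "card S' < n" "S' \<subseteq> E" using cS finS psubset_card_mono S by auto
        then show "d S' = 0" using less \<open>S' \<noteq> {}\<close> by blast
      qed
      have "0 = (\<Sum>S'\<in>{S'. S' \<noteq> {} \<and> S' \<subseteq> S}. d S')" using sub S by simp
      also have "\<dots> = d S + (\<Sum>S'\<in>{S'. S' \<noteq> {} \<and> S' \<subset> S}. d S')"
        unfolding eq using finP eq by (subst sum.insert) auto
      finally show "d S = 0" using z by simp
    qed
  qed
  then show ?thesis by blast
qed




definition inV :: "'x set \<Rightarrow> ('x set \<Rightarrow> 'r::comm_ring_1) \<Rightarrow> 'r \<Rightarrow> bool" where
  "inV E h p \<longleftrightarrow> (\<exists>d :: 'x set \<Rightarrow> int. p = (\<Sum>S\<in>{S. S \<noteq> {} \<and> S \<subseteq> E}. of_int (d S) * h S))"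

lemma inV_zero: "inV E h 0"
  unfolding inV_def by (rule exI[of _ "\<lambda>_. 0"]) simp

lemma inV_add: "inV E h p \<Longrightarrow> inV E h q \<Longrightarrow> inV E h (p + q)"
  unfolding inV_def
proof (elim exE)
  fix d1 d2 assume "p = (\<Sum>S\<in>{S. S \<noteq> {} \<and> S \<subseteq> E}. of_int (d1 S) * h S)"
     "q = (\<Sum>S\<in>{S. S \<noteq> {} \<and> S \<subseteq> E}. of_int (d2 S) * h S)"
  then show "\<exists>d. p + q = (\<Sum>S\<in>{S. S \<noteq> {} \<and> S \<subseteq> E}. of_int (d S) * h S)"
    by (intro exI[of _ "\<lambda>S. d1 S + d2 S"]) (simp add: sum.distrib distrib_right)
qed

lemma inV_scale: "inV E h p \<Longrightarrow> inV E h (of_int k * p)"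
  unfolding inV_def
proof (elim exE)
  fix d1 assume "p = (\<Sum>S\<in>{S. S \<noteq> {} \<and> S \<subseteq> E}. of_int (d1 S) * h S)"
  then show "\<exists>d. of_int k * p = (\<Sum>S\<in>{S. S \<noteq> {} \<and> S \<subseteq> E}. of_int (d S) * h S)"
    by (intro exI[of _ "\<lambda>S. k * d1 S"]) (simp add: sum_distrib_left mult.assoc)
qed

lemma inV_diff: "inV E h p \<Longrightarrow> inV E h q \<Longrightarrow> inV E h (p - q)"
  using inV_add[of E h p "of_int (-1) * q"] inV_scale[of E h q "-1"] by simp

lemma inV_sum: "finite A \<Longrightarrow> (\<And>a. a \<in> A \<Longrightarrow> inV E h (f a)) \<Longrightarrow> inV E h (\<Sum>a\<in>A. f a)"
  by (induction A rule: finite_induct) (auto intro: inV_zero inV_add)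

lemma inV_h: assumes "finite E" "S \<noteq> {}" "S \<subseteq> E" shows "inV E h (h S)"
proof -
  have fin: "finite {S. S \<noteq> {} \<and> S \<subseteq> E}" by (rule finite_subset[of _ "Pow E"]) (use assms in auto)
  have "(\<Sum>S'\<in>{S. S \<noteq> {} \<and> S \<subseteq> E}. of_int (if S' = S then 1 else 0) * h S') = h S"
  proof -
    have "(\<Sum>S'\<in>{S. S \<noteq> {} \<and> S \<subseteq> E}. of_int (if S' = S then 1 else 0) * h S') =
        (\<Sum>S'\<in>{S. S \<noteq> {} \<and> S \<subseteq> E}. if S' = S then h S' else 0)"
      by (intro sum.cong) auto
    also have "\<dots> = h S" using fin assms by (simp add: sum.delta')
    finally show ?thesis .
  qed
  then show ?thesis unfolding inV_def by (intro exI[of _ "\<lambda>S'. if S' = S then 1 else 0"]) simp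
qed

lemma comb2:
  fixes x :: "'x set \<Rightarrow> 'r::comm_ring_1"
  assumes fin: "finite E"
    and hdef: "\<And>S. h S = (\<Sum>T\<in>{T. T \<subset> E \<and> \<not> S \<subseteq> T}. x T)"
    and T: "T \<subset> E"
  shows "inV E h (x T)"
proof -
  have Ene: "E \<noteq> {}" using T by auto
  have finPT: "finite {T. T \<subset> E}" by (rule finite_subset[of _ "Pow E"]) (use fin in auto)
  define X where "X = (\<Sum>T\<in>{T. T \<subset> E}. x T)"
  define g where "g S = (\<Sum>T\<in>{T. T \<subset> E \<and> S \<subseteq> T}. x T)" for S
  have XE: "X = h E" unfolding X_def hdef by (intro sum.cong) auto
  have Xg: "X = h S + g S" for S
  proof -
    have "X = (\<Sum>T\<in>{T. T \<subset> E}. if S \<subseteq> T then x T else x T)" unfolding X_def by simp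
    also have "\<dots> = (\<Sum>T\<in>{T. T \<subset> E} \<inter> {T. S \<subseteq> T}. x T) + (\<Sum>T\<in>{T. T \<subset> E} \<inter> - {T. S \<subseteq> T}. x T)"
      by (rule sum.If_cases[OF finPT])
    also have "{T. T \<subset> E} \<inter> {T. S \<subseteq> T} = {T. T \<subset> E \<and> S \<subseteq> T}" by auto
    also have "{T. T \<subset> E} \<inter> - {T. S \<subseteq> T} = {T. T \<subset> E \<and> \<not> S \<subseteq> T}" by auto
    finally show ?thesis unfolding g_def hdef by simp
  qed
  have inVX: "inV E h X" unfolding XE using inV_h[OF fin Ene] by simp
  have inVg: "inV E h (g S)" if "S \<subseteq> E" for S
  proof (cases "S = {}")
    case True
    have "g S = X" unfolding g_def X_def using True by simp
    then show ?thesis using inVX by simp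
  next
    case False
    have "g S = X - h S" using Xg[of S] by simp
    then show ?thesis using inV_diff[OF inVX inV_h[OF fin False that]] by simp
  qed
  have main: "\<forall>T. card (E - T) = n \<longrightarrow> T \<subset> E \<longrightarrow> inV E h (x T)" for n
  proof (induction n rule: less_induct)
    case (less n)
    show ?case
    proof (intro allI impI)
      fix T assume cT: "card (E - T) = n" and T: "T \<subset> E"
      have finU: "finite {U. T \<subset> U \<and> U \<subset> E}" by (rule finite_subset[OF _ finPT]) auto
      have eq: "{U. U \<subset> E \<and> T \<subseteq> U} = insert T {U. T \<subset> U \<and> U \<subset> E}" using T by auto
      have "g T = x T + (\<Sum>U\<in>{U. T \<subset> U \<and> U \<subset> E}. x U)"
        unfolding g_def eq using finU by (subst sum.insert) auto
      then have xT: "x T = g T - (\<Sum>U\<in>{U. T \<subset> U \<and> U \<subset> E}. x U)" by (simp add: algebra_simps)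
      have "inV E h (\<Sum>U\<in>{U. T \<subset> U \<and> U \<subset> E}. x U)"
      proof (rule inV_sum[OF finU])
        fix U assume "U \<in> {U. T \<subset> U \<and> U \<subset> E}"
        then have U: "T \<subset> U" "U \<subset> E" by auto
        have "E - U \<subset> E - T" using U by auto
        then have "card (E - U) < n" using cT fin by (metis finite_Diff psubset_card_mono)
        then show "inV E h (x U)" using less U(2) by blast
      qed
      then show "inV E h (x T)" unfolding xT using inV_diff inVg T by blast
    qed
  qed
  then show ?thesis using T by blast
qed




definition inW :: "'x set set \<Rightarrow> ('x set \<Rightarrow> 'r::comm_ring_1) \<Rightarrow> 'r \<Rightarrow> bool" where
  "inW N h p \<longleftrightarrow> (\<exists>M :: ('x set \<Rightarrow> nat) set. \<exists>c :: ('x set \<Rightarrow> nat) \<Rightarrow> int. finite M \<and>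
      p = (\<Sum>\<alpha>\<in>M. of_int (c \<alpha>) * (\<Prod>S\<in>N. h S ^ \<alpha> S)))"

lemma inW_one: "inW N h 1"
  unfolding inW_def by (rule exI[of _ "{\<lambda>_. 0}"], rule exI[of _ "\<lambda>_. 1"]) simp

lemma inW_zero: "inW N h 0"
  unfolding inW_def by (rule exI[of _ "{}"]) simp

lemma inW_add: assumes "inW N h p" "inW N h q" shows "inW N h (p + q)"
proof -
  obtain M1 c1 where 1: "finite M1" "p = (\<Sum>\<alpha>\<in>M1. of_int (c1 \<alpha>) * (\<Prod>S\<in>N. h S ^ \<alpha> S))"
    using assms(1) unfolding inW_def by (elim exE conjE) (rule that)
  obtain M2 c2 where 2: "finite M2" "q = (\<Sum>\<alpha>\<in>M2. of_int (c2 \<alpha>) * (\<Prod>S\<in>N. h S ^ \<alpha> S))"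
    using assms(2) unfolding inW_def by (elim exE conjE) (rule that)
  let ?mon = "\<lambda>\<alpha>. (\<Prod>S\<in>N. h S ^ \<alpha> S)"
  define c where "c \<alpha> = (if \<alpha> \<in> M1 then c1 \<alpha> else 0) + (if \<alpha> \<in> M2 then c2 \<alpha> else 0)" for \<alpha>
  have fM: "finite (M1 \<union> M2)" using 1 2 by simp
  have "(\<Sum>\<alpha>\<in>M1 \<union> M2. of_int (c \<alpha>) * ?mon \<alpha>) =
      (\<Sum>\<alpha>\<in>M1 \<union> M2. if \<alpha> \<in> M1 then of_int (c1 \<alpha>) * ?mon \<alpha> else 0) +
      (\<Sum>\<alpha>\<in>M1 \<union> M2. if \<alpha> \<in> M2 then of_int (c2 \<alpha>) * ?mon \<alpha> else 0)"
    unfolding c_def sum.distrib[symmetric] by (intro sum.cong refl) (simp add: distrib_right)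
  also have "(\<Sum>\<alpha>\<in>M1 \<union> M2. if \<alpha> \<in> M1 then of_int (c1 \<alpha>) * ?mon \<alpha> else 0) = p"
    unfolding 1(2) using sum.inter_restrict[OF fM, of _ M1, symmetric] by (simp add: Int_absorb1)
  also have "(\<Sum>\<alpha>\<in>M1 \<union> M2. if \<alpha> \<in> M2 then of_int (c2 \<alpha>) * ?mon \<alpha> else 0) = q"
    unfolding 2(2) using sum.inter_restrict[OF fM, of _ M2, symmetric] by (simp add: Int_absorb1)
  finally show ?thesis unfolding inW_def
    using fM by (intro exI[of _ "M1 \<union> M2"] exI[of _ c] conjI fM) (rule sym)
qed

lemma inW_scale: assumes "inW N h p" shows "inW N h (of_int k * p)"
proof -
  obtain M1 c1 where 1: "finite M1" "p = (\<Sum>\<alpha>\<in>M1. of_int (c1 \<alpha>) * (\<Prod>S\<in>N. h S ^ \<alpha> S))"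
    using assms(1) unfolding inW_def by (elim exE conjE) (rule that)
  have "of_int k * p = (\<Sum>\<alpha>\<in>M1. of_int (k * c1 \<alpha>) * (\<Prod>S\<in>N. h S ^ \<alpha> S))"
    unfolding 1(2) by (simp add: sum_distrib_left mult.assoc)
  then show ?thesis unfolding inW_def
    by (intro exI[of _ M1] exI[of _ "\<lambda>\<alpha>. k * c1 \<alpha>"] conjI 1(1))
qed

lemma inW_sum: "finite A \<Longrightarrow> (\<And>a. a \<in> A \<Longrightarrow> inW N h (f a)) \<Longrightarrow> inW N h (\<Sum>a\<in>A. f a)"
  by (induction A rule: finite_induct) (auto intro: inW_zero inW_add)

lemma inW_mult_h: assumes "finite N" "S \<in> N" "inW N h p" shows "inW N h (h S * p)"
proof -
  obtain M1 c1 where 1: "finite M1" "p = (\<Sum>\<alpha>\<in>M1. of_int (c1 \<alpha>) * (\<Prod>S\<in>N. h S ^ \<alpha> S))"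
    using assms(3) unfolding inW_def by (elim exE conjE) (rule that)
  let ?mon = "\<lambda>\<alpha>. (\<Prod>S\<in>N. h S ^ \<alpha> S)"
  define sh where "sh \<alpha> = \<alpha>(S := Suc (\<alpha> S))" for \<alpha> :: "'a set \<Rightarrow> nat"
  have inj: "inj_on sh M1"
  proof (rule inj_onI)
    fix a b assume e: "sh a = sh b"
    show "a = b"
    proof
      fix x show "a x = b x"
      proof (cases "x = S")
        case True then show ?thesis using fun_cong[OF e, of S] by (simp add: sh_def)
      next
        case False then show ?thesis using fun_cong[OF e, of x] by (simp add: sh_def)
      qed
    qed
  qed
  have monsh: "?mon (sh \<alpha>) = h S * ?mon \<alpha>" for \<alpha>
  proof -
    have "?mon (sh \<alpha>) = h S ^ sh \<alpha> S * (\<Prod>S'\<in>N - {S}. h S' ^ sh \<alpha> S')"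
      by (rule prod.remove[OF assms(1,2)])
    also have "(\<Prod>S'\<in>N - {S}. h S' ^ sh \<alpha> S') = (\<Prod>S'\<in>N - {S}. h S' ^ \<alpha> S')"
      unfolding sh_def by (intro prod.cong) auto
    also have "h S ^ sh \<alpha> S = h S * h S ^ \<alpha> S" unfolding sh_def by simp
    also have "h S * h S ^ \<alpha> S * (\<Prod>S'\<in>N - {S}. h S' ^ \<alpha> S') = h S * ?mon \<alpha>"
      using prod.remove[OF assms(1,2), of "\<lambda>S'. h S' ^ \<alpha> S'"] by (simp add: mult.assoc)
    finally show ?thesis .
  qed
  define c where "c \<beta> = c1 (inv_into M1 sh \<beta>)" for \<beta>
  have "h S * p = (\<Sum>\<alpha>\<in>M1. of_int (c (sh \<alpha>)) * ?mon (sh \<alpha>))"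
    unfolding 1(2) sum_distrib_left c_def monsh using inj
    by (intro sum.cong refl) (simp add: inv_into_f_f[OF inj] mult.left_commute)
  also have "\<dots> = (\<Sum>\<beta>\<in>sh ` M1. of_int (c \<beta>) * ?mon \<beta>)"
    using sum.reindex[OF inj, of "\<lambda>\<beta>. of_int (c \<beta>) * ?mon \<beta>"] by simp
  finally have eq: "h S * p = (\<Sum>\<beta>\<in>sh ` M1. of_int (c \<beta>) * ?mon \<beta>)" .
  show ?thesis unfolding inW_def
    by (intro exI[of _ "sh ` M1"] exI[of _ c] conjI finite_imageI 1(1)) (rule eq)
qed

lemma inW_mult_hpow: assumes "finite N" "S \<in> N" "inW N h p" shows "inW N h (h S ^ n * p)"
  using assms by (induction n) (auto simp: mult.assoc intro: inW_mult_h)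

lemma inW_mult_mon: assumes "finite N" "inW N h p" shows "inW N h ((\<Prod>S\<in>N. h S ^ \<alpha> S) * p)"
proof -
  have "A \<subseteq> N \<Longrightarrow> inW N h ((\<Prod>S\<in>A. h S ^ \<alpha> S) * p)" for A
  proof (induction A rule: infinite_finite_induct)
    case (infinite A) then show ?case using assms(1) finite_subset by blast
  next
    case empty then show ?case using assms(2) by simp
  next
    case (insert x F)
    have "inW N h (h x ^ \<alpha> x * ((\<Prod>S\<in>F. h S ^ \<alpha> S) * p))"
      by (rule inW_mult_hpow[OF assms(1)]) (use insert in auto)
    then show ?case using insert by (simp add: mult.assoc)
  qed
  then show ?thesis by simp
qed

lemma inW_mult: assumes "finite N" "inW N h q" "inW N h p" shows "inW N h (q * p)"
proof -
  obtain M1 c1 where 1: "finite M1" "q = (\<Sum>\<alpha>\<in>M1. of_int (c1 \<alpha>) * (\<Prod>S\<in>N. h S ^ \<alpha> S))"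
    using assms(2) unfolding inW_def by (elim exE conjE) (rule that)
  have "q * p = (\<Sum>\<alpha>\<in>M1. of_int (c1 \<alpha>) * ((\<Prod>S\<in>N. h S ^ \<alpha> S) * p))"
    unfolding 1(2) sum_distrib_right by (rule sum.cong[OF refl]) (rule mult.assoc)
  moreover have "inW N h (\<Sum>\<alpha>\<in>M1. of_int (c1 \<alpha>) * ((\<Prod>S\<in>N. h S ^ \<alpha> S) * p))"
    by (rule inW_sum[OF 1(1)], rule inW_scale, rule inW_mult_mon[OF assms(1,3)])
  ultimately show ?thesis by (simp only:)
qed

lemma inW_h: assumes "finite N" "S \<in> N" shows "inW N h (h S)"
  using inW_mult_h[OF assms inW_one] by simp




lemma ig_gen: "g \<in> G \<Longrightarrow> g \<in> ideal_gen G"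
  unfolding ideal_gen_def by (rule CollectI, rule exI[of _ "{g}"], rule exI[of _ "\<lambda>_. 1"]) simp

lemma ig_zero: "0 \<in> ideal_gen G"
  unfolding ideal_gen_def by (rule CollectI, rule exI[of _ "{}"]) simp

lemma ig_add: assumes "p \<in> ideal_gen G" "q \<in> ideal_gen G" shows "p + q \<in> ideal_gen G"
proof -
  obtain F1 c1 where 1: "finite F1" "F1 \<subseteq> G" "p = (\<Sum>g\<in>F1. c1 g * g)"
    using assms(1) unfolding ideal_gen_def by (elim CollectE exE conjE) (rule that)
  obtain F2 c2 where 2: "finite F2" "F2 \<subseteq> G" "q = (\<Sum>g\<in>F2. c2 g * g)"
    using assms(2) unfolding ideal_gen_def by (elim CollectE exE conjE) (rule that)
  define c where "c g = (if g \<in> F1 then c1 g else 0) + (if g \<in> F2 then c2 g else 0)" for g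
  have fM: "finite (F1 \<union> F2)" using 1 2 by simp
  have "(\<Sum>g\<in>F1 \<union> F2. c g * g) =
      (\<Sum>g\<in>F1 \<union> F2. if g \<in> F1 then c1 g * g else 0) + (\<Sum>g\<in>F1 \<union> F2. if g \<in> F2 then c2 g * g else 0)"
    unfolding c_def sum.distrib[symmetric] by (intro sum.cong refl) (simp add: distrib_right)
  also have "(\<Sum>g\<in>F1 \<union> F2. if g \<in> F1 then c1 g * g else 0) = p"
    unfolding 1(3) using sum.inter_restrict[OF fM, of _ F1, symmetric] by (simp add: Int_absorb1)
  also have "(\<Sum>g\<in>F1 \<union> F2. if g \<in> F2 then c2 g * g else 0) = q"
    unfolding 2(3) using sum.inter_restrict[OF fM, of _ F2, symmetric] by (simp add: Int_absorb1)
  finally have "p + q = (\<Sum>g\<in>F1 \<union> F2. c g * g)" by simp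
  then show ?thesis unfolding ideal_gen_def using fM 1(2) 2(2)
    by (intro CollectI exI[of _ "F1 \<union> F2"] exI[of _ c] conjI) auto
qed

lemma ig_mult: assumes "p \<in> ideal_gen G" shows "r * p \<in> ideal_gen G"
proof -
  obtain F1 c1 where 1: "finite F1" "F1 \<subseteq> G" "p = (\<Sum>g\<in>F1. c1 g * g)"
    using assms(1) unfolding ideal_gen_def by (elim CollectE exE conjE) (rule that)
  have "r * p = (\<Sum>g\<in>F1. (r * c1 g) * g)" unfolding 1(3) by (simp add: sum_distrib_left mult.assoc)
  then show ?thesis unfolding ideal_gen_def using 1
    by (intro CollectI exI[of _ F1] exI[of _ "\<lambda>g. r * c1 g"] conjI) auto
qed

lemma ig_diff: assumes "p \<in> ideal_gen G" "q \<in> ideal_gen G" shows "p - q \<in> ideal_gen G"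
  using ig_add[OF assms(1) ig_mult[OF assms(2), of "-1"]] by simp

lemma ig_sum: "finite A \<Longrightarrow> (\<And>a. a \<in> A \<Longrightarrow> f a \<in> ideal_gen G) \<Longrightarrow> (\<Sum>a\<in>A. f a) \<in> ideal_gen G"
  by (induction A rule: finite_induct) (auto intro: ig_zero ig_add)

lemma lgen_unit:
  assumes "finite Et" "j \<in> Et" "\<forall>j\<in>Et. \<pi> j \<in> groundE m"
  shows "lgen m Et \<pi> (\<lambda>i. if i = j then 1 else 0) = var (Inr j) - hS m {\<pi> j}"
proof -
  let ?u = "(\<lambda>i. if i = j then 1 else (0::int))"
  let ?PT = "{T. T \<subset> groundE m}"
  have cu: "(\<Sum>i\<in>Et. ?u i * ray_vec m Et \<pi> r i) = ray_vec m Et \<pi> r j" for r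
  proof -
    have "(\<Sum>i\<in>Et. ?u i * ray_vec m Et \<pi> r i) = (\<Sum>i\<in>Et. if i = j then ray_vec m Et \<pi> r i else 0)"
      by (intro sum.cong refl) simp
    also have "\<dots> = ray_vec m Et \<pi> r j" using assms(1,2) by simp
    finally show ?thesis .
  qed
  have "lgen m Et \<pi> ?u = (\<Sum>r\<in>Inl ` ?PT \<union> Inr ` Et. of_int (ray_vec m Et \<pi> r j) * var r)"
    unfolding lgen_def cu rays_def ..
  also have "\<dots> = (\<Sum>r\<in>Inl ` ?PT. of_int (ray_vec m Et \<pi> r j) * var r) + (\<Sum>r\<in>Inr ` Et. of_int (ray_vec m Et \<pi> r j) * var r)"
    by (rule sum.union_disjoint) (use assms(1) finite_PT in auto)
  also have "(\<Sum>r\<in>Inl ` ?PT. of_int (ray_vec m Et \<pi> r j) * var r) = (\<Sum>T\<in>?PT. of_int (ray_vec m Et \<pi> (Inl T) j) * var (Inl T))"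
    by (rule sum.reindex_cong[of Inl]) (auto intro: inj_onI)
  also have "\<dots> = (\<Sum>T\<in>?PT. if \<not> {\<pi> j} \<subseteq> T then - xT T else 0)"
    using assms(2) by (intro sum.cong) (auto simp: ray_vec_def preim_def xT_def)
  also have "\<dots> = - hS m {\<pi> j}"
    unfolding hS_def using finite_PT by (simp add: sum.inter_filter[symmetric] sum_negf conj_commute)
  also have "(\<Sum>r\<in>Inr ` Et. of_int (ray_vec m Et \<pi> r j) * var r) = (\<Sum>i\<in>Et. of_int (ray_vec m Et \<pi> (Inr i) j) * var (Inr i))"
    by (rule sum.reindex_cong[of Inr]) (auto intro: inj_onI)
  also have "\<dots> = (\<Sum>i\<in>Et. if i = j then var (Inr i) else 0)"
    by (intro sum.cong) (auto simp: ray_vec_def)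
  also have "\<dots> = var (Inr j)" using assms(1,2) by simp
  finally show ?thesis by simp
qed




lemma poly_expand: "(p :: 'a \<Rightarrow>\<^sub>0 'c::comm_monoid_add) = (\<Sum>x\<in>Poly_Mapping.keys p. Poly_Mapping.single x (Poly_Mapping.lookup p x))"
proof (rule poly_mapping_eqI)
  fix y
  have "Poly_Mapping.lookup (\<Sum>x\<in>Poly_Mapping.keys p. Poly_Mapping.single x (Poly_Mapping.lookup p x)) y
      = (\<Sum>x\<in>Poly_Mapping.keys p. if x = y then Poly_Mapping.lookup p x else 0)"
    by (simp add: lookup_sum lookup_single when_def)
  also have "\<dots> = Poly_Mapping.lookup p y"
    by (simp add: in_keys_iff)
  finally show "Poly_Mapping.lookup p y = Poly_Mapping.lookup (\<Sum>x\<in>Poly_Mapping.keys p. Poly_Mapping.single x (Poly_Mapping.lookup p x)) y" by simp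
qed

lemma var_pow: "var r ^ n = Poly_Mapping.single (Poly_Mapping.single r n) (1::int)"
proof (induction n)
  case 0 then show ?case by simp
next
  case (Suc n)
  have "var r ^ Suc n = var r * var r ^ n" by simp
  also have "\<dots> = Poly_Mapping.single (Poly_Mapping.single r 1 + Poly_Mapping.single r n) 1"
    by (simp only: Suc) (simp add: var_def mult_single)
  also have "Poly_Mapping.single r 1 + Poly_Mapping.single r n = Poly_Mapping.single r (Suc n)"
    by (simp add: single_add[symmetric])
  finally show ?case .
qed

lemma prod_var_pow: "finite K \<Longrightarrow> (\<Prod>r\<in>K. var r ^ n r) = Poly_Mapping.single (\<Sum>r\<in>K. Poly_Mapping.single r (n r)) (1::int)"
proof (induction K rule: finite_induct)
  case empty then show ?case by simp
next
  case (insert x F)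
  then show ?case by (simp add: var_pow mult_single)
qed

lemma mono_eq: "Poly_Mapping.single mon (k::int) = of_int k * (\<Prod>r\<in>Poly_Mapping.keys mon. var r ^ Poly_Mapping.lookup mon r)"
proof -
  have A: "(\<Prod>r\<in>Poly_Mapping.keys mon. var r ^ Poly_Mapping.lookup mon r) = Poly_Mapping.single mon 1"
    using prod_var_pow[of "Poly_Mapping.keys mon" "Poly_Mapping.lookup mon"] poly_expand[of mon] by simp
  have B: "(of_int k :: 'b rpoly) = Poly_Mapping.single 0 k" by (metis of_int_eq_id id_apply single_of_int)
  show ?thesis unfolding A B mult_single by simp
qed

lemma inV_inW: assumes "finite E" "inV E h v" shows "inW {S. S \<noteq> {} \<and> S \<subseteq> E} h v"
proof -
  have finNE: "finite {S. S \<noteq> {} \<and> S \<subseteq> E}" by (rule finite_subset[of _ "Pow E"]) (use assms in auto)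
  obtain d where d: "v = (\<Sum>S\<in>{S. S \<noteq> {} \<and> S \<subseteq> E}. of_int (d S) * h S)"
    using assms(2) unfolding inV_def by (elim exE) (rule that)
  show ?thesis unfolding d
    by (rule inW_sum[OF finNE], rule inW_scale, rule inW_h[OF finNE]) simp
qed




lemma finite_groundE: "finite (groundE m)" by (simp add: groundE_def)

lemma hS_eq: "hS m S = (\<Sum>T\<in>{T. T \<subset> groundE m \<and> \<not> S \<subseteq> T}. xT T)"
  by (simp add: hS_def)

lemma coef_hS_Inr: "coef (Inr i) (hS m S) = 0"
  unfolding hS_def coef_sum xT_def coef_var by simp

lemma coef_hS_Inl: assumes "T \<subset> groundE m" shows "coef (Inl T) (hS m S) = (if S \<subseteq> T then 0 else 1)"
proof -
  have fin: "finite {T. T \<subset> groundE m \<and> \<not> S \<subseteq> T}" by (rule finite_subset[OF _ finite_PT[of m]]) auto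
  have "coef (Inl T) (hS m S) = (\<Sum>T'\<in>{T. T \<subset> groundE m \<and> \<not> S \<subseteq> T}. if T' = T then 1 else 0)"
    unfolding hS_def coef_sum xT_def coef_var by (intro sum.cong refl) simp
  also have "\<dots> = (if S \<subseteq> T then 0 else 1)" using fin assms by (simp add: sum.delta')
  finally show ?thesis .
qed

lemma varV:
  assumes "finite Et" "\<forall>j\<in>Et. \<pi> j \<in> groundE m" "r \<in> rays m Et"
  shows "\<exists>v. inV (groundE m) (hS m) v \<and> var r - v \<in> chow_ideal m Et \<pi>"
  using assms(3) unfolding rays_def
proof
  assume "r \<in> Inl ` {T. T \<subset> groundE m}"
  then obtain T where T: "r = Inl T" "T \<subset> groundE m" by auto
  have "inV (groundE m) (hS m) (xT T)"
    by (rule comb2[OF finite_groundE hS_eq T(2)])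
  moreover have "var r - xT T \<in> chow_ideal m Et \<pi>" unfolding T xT_def chow_ideal_def by (simp add: ig_zero)
  ultimately show ?thesis by blast
next
  assume "r \<in> Inr ` Et"
  then obtain j where j: "r = Inr j" "j \<in> Et" by auto
  have "inV (groundE m) (hS m) (hS m {\<pi> j})"
    by (rule inV_h[OF finite_groundE]) (use assms(2) j in auto)
  moreover have "var r - hS m {\<pi> j} \<in> chow_ideal m Et \<pi>"
  proof -
    have "lgen m Et \<pi> (\<lambda>i. if i = j then 1 else 0) \<in> lin_gens m Et \<pi>" unfolding lin_gens_lgen by simp
    then have "lgen m Et \<pi> (\<lambda>i. if i = j then 1 else 0) \<in> chow_ideal m Et \<pi>"
      unfolding chow_ideal_def by (intro ig_gen) simp
    then show ?thesis using lgen_unit[OF assms(1) j(2) assms(2)] j(1) by simp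
  qed
  ultimately show ?thesis by blast
qed




theorem proposition2p10:
  fixes m :: nat and a :: "nat \<Rightarrow> nat" and Et :: "'b set" and \<pi> :: "'b \<Rightarrow> nat"
  assumes "finite Et"
    and "\<forall>j\<in>Et. \<pi> j \<in> groundE m"
    and "\<forall>i\<in>groundE m. card (preim Et \<pi> {i}) = a i"
    and "\<forall>i\<in>groundE m. a i \<ge> 1"
  shows
    \<comment> \<open>the h_S span A^1\<close>
    "(\<forall>f. linear_form (rays m Et) f \<longrightarrow>
        (\<exists>d :: nat set \<Rightarrow> int.
           f - (\<Sum>S\<in>{S. S \<noteq> {} \<and> S \<subseteq> groundE m}. of_int (d S) * hS m S)
             \<in> chow_ideal m Et \<pi>))
   \<and> \<comment> \<open>the h_S are linearly independent in A^1\<close>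
    (\<forall>d :: nat set \<Rightarrow> int.
        (\<Sum>S\<in>{S. S \<noteq> {} \<and> S \<subseteq> groundE m}. of_int (d S) * (hS m S :: 'b rpoly))
           \<in> chow_ideal m Et \<pi>
        \<longrightarrow> (\<forall>S. S \<noteq> {} \<and> S \<subseteq> groundE m \<longrightarrow> d S = 0))
   \<and> \<comment> \<open>monomials in the h_S span A as an abelian group\<close>
    (\<forall>p. uses_vars (rays m Et) p \<longrightarrow>
        (\<exists>M :: (nat set \<Rightarrow> nat) set. \<exists>c :: (nat set \<Rightarrow> nat) \<Rightarrow> int.
           finite M \<and>
           p - (\<Sum>\<alpha>\<in>M. of_int (c \<alpha>) *
                  (\<Prod>S\<in>{S. S \<noteq> {} \<and> S \<subseteq> groundE m}. hS m S ^ \<alpha> S))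
             \<in> chow_ideal m Et \<pi>))"
proof -
  let ?E = "groundE m"
  let ?NE = "{S. S \<noteq> {} \<and> S \<subseteq> groundE m}"
  let ?I = "chow_ideal m Et \<pi>"
  let ?G = "SR_gens m Et \<pi> \<union> lin_gens m Et \<pi>"
  have finNE: "finite ?NE" by (rule finite_subset[of _ "Pow ?E"]) (use finite_groundE in auto)
  have finR: "finite (rays m Et)" by (rule finite_rays[OF assms(1)])
  have surj: "\<forall>i\<in>?E. \<exists>j\<in>Et. \<pi> j = i"
  proof
    fix i assume i: "i \<in> ?E"
    then have "card (preim Et \<pi> {i}) \<ge> 1" using assms(3,4) by auto
    then have "preim Et \<pi> {i} \<noteq> {}" by auto
    then show "\<exists>j\<in>Et. \<pi> j = i" unfolding preim_def by auto
  qed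
  obtain V where V: "\<And>r. r \<in> rays m Et \<Longrightarrow> inV ?E (hS m) (V r) \<and> var r - V r \<in> ?I"
    using varV[OF assms(1,2)] by metis
  have P1: "\<exists>d :: nat set \<Rightarrow> int. f - (\<Sum>S\<in>?NE. of_int (d S) * hS m S) \<in> ?I"
    if lf: "linear_form (rays m Et) f" for f
  proof -
    obtain c where c: "f = (\<Sum>r\<in>rays m Et. of_int (c r) * var r)"
      using lf unfolding linear_form_def by (elim exE) (rule that)
    have "inV ?E (hS m) (\<Sum>r\<in>rays m Et. of_int (c r) * V r)"
      by (rule inV_sum[OF finR], rule inV_scale) (use V in blast)
    then obtain d where d: "(\<Sum>r\<in>rays m Et. of_int (c r) * V r) = (\<Sum>S\<in>?NE. of_int (d S) * hS m S)"
      unfolding inV_def by (elim exE) (rule that)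
    have "f - (\<Sum>r\<in>rays m Et. of_int (c r) * V r) = (\<Sum>r\<in>rays m Et. of_int (c r) * (var r - V r))"
      unfolding c sum_subtractf[symmetric] by (simp add: right_diff_distrib)
    also have "\<dots> \<in> ?I" unfolding chow_ideal_def
      by (rule ig_sum[OF finR], rule ig_mult) (use V in \<open>simp add: chow_ideal_def\<close>)
    finally show ?thesis unfolding d by blast
  qed
  have P2: "\<forall>S. S \<noteq> {} \<and> S \<subseteq> ?E \<longrightarrow> d S = 0"
    if mem: "(\<Sum>S\<in>?NE. of_int (d S) * (hS m S :: 'b rpoly)) \<in> ?I" for d :: "nat set \<Rightarrow> int"
  proof -
    let ?P = "(\<Sum>S\<in>?NE. of_int (d S) * (hS m S :: 'b rpoly))"
    obtain U where U: "\<And>r. r \<in> rays m Et \<Longrightarrow> coef r ?P = (\<Sum>j\<in>Et. U j * ray_vec m Et \<pi> r j)"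
      using ideal_coef[OF assms(1) surj mem] by blast
    have coefP: "coef r ?P = (\<Sum>S\<in>?NE. d S * coef r (hS m S))" for r
      unfolding coef_sum coef_of_int_mult ..
    have U0: "U i = 0" if i: "i \<in> Et" for i
    proof -
      have "Inr i \<in> rays m Et" using i unfolding rays_def by auto
      then have "coef (Inr i) ?P = (\<Sum>j\<in>Et. U j * ray_vec m Et \<pi> (Inr i) j)" by (rule U)
      also have "\<dots> = (\<Sum>j\<in>Et. if j = i then U j else 0)"
        by (intro sum.cong refl) (simp add: ray_vec_def)
      also have "\<dots> = U i" using assms(1) i by simp
      finally show ?thesis unfolding coefP coef_hS_Inr by simp
    qed
    have "\<forall>T. T \<subset> ?E \<longrightarrow> (\<Sum>S\<in>?NE. d S * (if S \<subseteq> T then 0 else 1)) = 0"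
    proof (intro allI impI)
      fix T assume T: "T \<subset> ?E"
      have "Inl T \<in> rays m Et" using T unfolding rays_def by auto
      then have "coef (Inl T) ?P = (\<Sum>j\<in>Et. U j * ray_vec m Et \<pi> (Inl T) j)" by (rule U)
      also have "\<dots> = 0" using U0 by simp
      finally show "(\<Sum>S\<in>?NE. d S * (if S \<subseteq> T then 0 else 1)) = 0"
        unfolding coefP coef_hS_Inl[OF T] .
    qed
    then show ?thesis by (rule comb1[OF finite_groundE])
  qed
  define Pp where "Pp p \<longleftrightarrow> (\<exists>w. inW ?NE (hS m) w \<and> p - w \<in> ?I)" for p :: "'b rpoly"
  have I_add: "x \<in> ?I \<Longrightarrow> y \<in> ?I \<Longrightarrow> x + y \<in> ?I" for x y unfolding chow_ideal_def by (rule ig_add)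
  have I_mult: "x \<in> ?I \<Longrightarrow> z * x \<in> ?I" for x z unfolding chow_ideal_def by (rule ig_mult)
  have I_zero: "0 \<in> ?I" unfolding chow_ideal_def by (rule ig_zero)
  have Pp_const: "Pp (of_int k)" for k
    unfolding Pp_def using inW_scale[OF inW_one, of ?NE "hS m" k] I_zero by (intro exI[of _ "of_int k * 1"]) simp
  have Pp_add: "Pp x \<Longrightarrow> Pp y \<Longrightarrow> Pp (x + y)" for x y
  proof -
    assume "Pp x" "Pp y"
    then obtain w1 w2 where "inW ?NE (hS m) w1" "x - w1 \<in> ?I" "inW ?NE (hS m) w2" "y - w2 \<in> ?I"
      unfolding Pp_def by blast
    then show "Pp (x + y)" unfolding Pp_def
      by (intro exI[of _ "w1 + w2"] conjI inW_add) (auto dest: I_add simp: algebra_simps)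
  qed
  have Pp_scale: "Pp x \<Longrightarrow> Pp (of_int k * x)" for x k
  proof -
    assume "Pp x"
    then obtain w1 where "inW ?NE (hS m) w1" "x - w1 \<in> ?I" unfolding Pp_def by blast
    then show "Pp (of_int k * x)" unfolding Pp_def
      by (intro exI[of _ "of_int k * w1"] conjI inW_scale) (auto dest: I_mult[of _ "of_int k"] simp: algebra_simps)
  qed
  have Pp_var: "Pp (var r * x)" if r: "r \<in> rays m Et" and x: "Pp x" for r x
  proof -
    obtain w where w: "inW ?NE (hS m) w" "x - w \<in> ?I" using x unfolding Pp_def by blast
    have v: "inV ?E (hS m) (V r)" "var r - V r \<in> ?I" using V[OF r] by auto
    have "inW ?NE (hS m) (V r * w)"
      by (rule inW_mult[OF finNE inV_inW[OF finite_groundE v(1)] w(1)])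
    moreover have "var r * x - V r * w = var r * (x - w) + (var r - V r) * w" by (simp add: algebra_simps)
    moreover have "var r * (x - w) + (var r - V r) * w \<in> ?I"
      using I_add[OF I_mult[OF w(2)] I_mult[OF v(2)]] by (simp add: mult.commute)
    ultimately show ?thesis unfolding Pp_def by metis
  qed
  have Pp_pow: "Pp (var r ^ n * x)" if r: "r \<in> rays m Et" and x: "Pp x" for r x n
    using x by (induction n) (auto simp: mult.assoc intro: Pp_var[OF r])
  have Pp_prod: "K \<subseteq> rays m Et \<Longrightarrow> Pp x \<Longrightarrow> Pp ((\<Prod>r\<in>K. var r ^ n r) * x)" for K x n
  proof (induction K arbitrary: x rule: infinite_finite_induct)
    case (infinite A) then show ?case using finR finite_subset by blast
  next
    case empty then show ?case by simp
  next
    case (insert y F)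
    have "Pp (var y ^ n y * ((\<Prod>r\<in>F. var r ^ n r) * x))"
      by (rule Pp_pow) (use insert in auto)
    then show ?case using insert by (simp add: mult.assoc)
  qed
  have P3: "Pp p" if uv: "uses_vars (rays m Et) p" for p
  proof -
    have gen: "K \<subseteq> Poly_Mapping.keys p \<Longrightarrow> Pp (\<Sum>mon\<in>K. Poly_Mapping.single mon (Poly_Mapping.lookup p mon))" for K
    proof (induction K rule: infinite_finite_induct)
      case (infinite A) then show ?case using finite_keys[of p] finite_subset by blast
    next
      case empty then show ?case using Pp_const[of 0] by simp
    next
      case (insert mon K)
      then have kr: "Poly_Mapping.keys mon \<subseteq> rays m Et" using uv unfolding uses_vars_def by auto
      have "Pp (of_int (Poly_Mapping.lookup p mon) * ((\<Prod>r\<in>Poly_Mapping.keys mon. var r ^ Poly_Mapping.lookup mon r) * 1))"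
        by (rule Pp_scale, rule Pp_prod[OF kr]) (use Pp_const[of 1] in simp)
      then have "Pp (Poly_Mapping.single mon (Poly_Mapping.lookup p mon))" by (simp add: mono_eq[symmetric])
      then show ?case using insert by (simp add: Pp_add)
    qed
    have "Pp (\<Sum>mon\<in>Poly_Mapping.keys p. Poly_Mapping.single mon (Poly_Mapping.lookup p mon))"
      by (rule gen) simp
    then show ?thesis using poly_expand[of p] by simp
  qed
  show ?thesis
  proof (intro conjI allI impI)
    fix f assume "linear_form (rays m Et) f" then show "\<exists>d. f - (\<Sum>S\<in>?NE. of_int (d S) * hS m S) \<in> ?I" by (rule P1)
  next
    fix d :: "nat set \<Rightarrow> int" and S assume "(\<Sum>S\<in>?NE. of_int (d S) * (hS m S :: 'b rpoly)) \<in> ?I" "S \<noteq> {} \<and> S \<subseteq> ?E"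
    then show "d S = 0" using P2 by blast
  next
    fix p :: "'b rpoly" assume "uses_vars (rays m Et) p"
    then obtain w where w: "inW ?NE (hS m) w" "p - w \<in> ?I" using P3 unfolding Pp_def by blast
    then obtain M c where "finite M" "w = (\<Sum>\<alpha>\<in>M. of_int (c \<alpha>) * (\<Prod>S\<in>?NE. hS m S ^ \<alpha> S))"
      unfolding inW_def by (elim exE conjE) (rule that)
    then show "\<exists>M c. finite M \<and> p - (\<Sum>\<alpha>\<in>M. of_int (c \<alpha>) * (\<Prod>S\<in>?NE. hS m S ^ \<alpha> S)) \<in> ?I"
      using w(2) by blast
  qed
qed



end
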